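(* Let $C_1\geq C_2\geq 0$ and let $n>8^4(C_1-C_2+1)^4$ be an integer such that $f(m)<\sqrt{m}+C_1$ for all $m<n$. If $\chi$ is a red-blue colouring of $E(K_n)$ with $f(n,\chi)>\sqrt{n}+C_2$, then there is a monochromatic path $P$ in $K_n$ such that $Y=[n]\setminus V(P)$ satisfies $|Y|\leq \sqrt{n}+8(C_1-C_2+1)\sqrt[4]{n}$. Furthermore, if $\gamma$ is the colour of the edges of $P$, then for every $y\in Y$ the set $\{x\in V(P):\chi(xy)=\gamma\}$ has size at most $2(C_1-C_2+1)\sqrt{n}$.
   Context: $K_n$ is the complete graph on vertex set $[n]=\{1,\dots,n\}$. For a red-blue colouring $\chi$ of $E(K_n)$, $f(n,\chi)$ is the smallest size of a family of monochromatic paths, all of the same colour, whose union covers $[n]$; here paths may have length zero (a single vertex) and need not be disjoint. $f(n)$ is the maximum of $f(n,\chi)$ over all red-blue colourings $\chi$ of $E(K_n)$. *)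

theory Defs
  imports Complex_Main
begin

text \<open>A red-blue colouring of the edges of K_n on vertex set [n] = {1..n} is a map
  from two-element sets {x,y} to bool (True = red, False = blue); only its values on
  edges {x,y} with x \<noteq> y in {1..n} are relevant.\<close>

type_synonym colouring = "nat set \<Rightarrow> bool"

definition mono_path :: "nat \<Rightarrow> colouring \<Rightarrow> bool \<Rightarrow> nat list \<Rightarrow> bool" where
  "mono_path n chi c P \<longleftrightarrow>
     P \<noteq> [] \<and> distinct P \<and> set P \<subseteq> {1..n} \<and>
     (\<forall>i. Suc i < length P \<longrightarrow> chi {P ! i, P ! Suc i} = c)"

definition path_cover :: "nat \<Rightarrow> colouring \<Rightarrow> bool \<Rightarrow> nat \<Rightarrow> bool" where
  "path_cover n chi c k \<longleftrightarrow>
     (\<exists>Ps. length Ps = k \<and> (\<forall>P\<in>set Ps. mono_path n chi c P) \<and>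
           (\<Union>P\<in>set Ps. set P) = {1..n})"

definition f_col :: "nat \<Rightarrow> colouring \<Rightarrow> nat" where
  "f_col n chi = (LEAST k. \<exists>c. path_cover n chi c k)"

definition f_max :: "nat \<Rightarrow> nat" where
  "f_max n = Max (range (f_col n))"

end

theory Submission
  imports Defs
begin


lemma mono_path_iff:
  "mono_path n chi c P \<longleftrightarrow> P \<noteq> [] \<and> distinct P \<and> set P \<subseteq> {1..n} \<and>
     successively (\<lambda>a b. chi {a,b} = c) P"
  unfolding mono_path_def successively_conv_nth by blast

lemma succ_rev_sym:
  "successively (\<lambda>a b. chi {a,b} = c) (rev xs) \<longleftrightarrow> successively (\<lambda>a b. chi {a,b} = c) xs"
  by (simp add: insert_commute)

lemma path_cover_triv: "path_cover m chi c m"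
proof -
  let ?Ps = "map (\<lambda>i. [i]) [1..<Suc m]"
  have "length ?Ps = m" by simp
  moreover have "\<forall>P\<in>set ?Ps. mono_path m chi c P" by (auto simp: mono_path_def)
  moreover have "(\<Union>P\<in>set ?Ps. set P) = {1..m}" by auto
  ultimately show ?thesis unfolding path_cover_def by blast
qed

lemma f_col_le: "f_col m chi \<le> m"
  unfolding f_col_def by (rule Least_le) (use path_cover_triv in blast)

lemma f_col_cover: "\<exists>c. path_cover m chi c (f_col m chi)"
  unfolding f_col_def by (rule LeastI_ex) (use path_cover_triv in blast)

lemma f_col_le_max: "f_col m chi \<le> f_max m"
proof -
  have "range (f_col m) \<subseteq> {..m}" using f_col_le by auto
  hence "finite (range (f_col m))" using finite_subset by blast
  thus ?thesis unfolding f_max_def by (rule Max_ge) simp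
qed

lemma f_col_le_cover: "path_cover n chi c k \<Longrightarrow> f_col n chi \<le> k"
  unfolding f_col_def by (rule Least_le) blast



lemma KL:
  assumes h4: "\<forall>m. 1 \<le> m \<and> m < n \<longrightarrow> real (f_max m) < sqrt (real m) + C1"
    and S: "S \<subseteq> {1..n}" "S \<noteq> {}" "card S < n"
    and cov: "\<And>c. \<exists>Ps. length Ps \<le> T \<and> (\<forall>Q\<in>set Ps. mono_path n chi c Q) \<and>
                       S \<subseteq> (\<Union>Q\<in>set Ps. set Q)"
  shows "real (f_col n chi) < sqrt (real (n - card S)) + C1 + real T"
proof -
  define R where "R = {1..n} - S"
  define m where "m = card R"
  have fS: "finite S" using S(1) finite_subset by blast
  have m_eq: "m = n - card S" unfolding m_def R_def using S(1) by (simp add: card_Diff_subset fS)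
  have "card S > 0" using S(2) fS by auto
  hence m1: "1 \<le> m" "m < n" using S(3) m_eq by auto
  obtain h where h: "bij_betw h {1..m} R"
    using ex_bij_betw_nat_finite_1[of R] unfolding m_def R_def by auto
  define chi' where "chi' = (\<lambda>e. chi (h ` e))"
  obtain c where pc: "path_cover m chi' c (f_col m chi')" using f_col_cover by blast
  then obtain Ps' where Ps': "length Ps' = f_col m chi'" "\<forall>P\<in>set Ps'. mono_path m chi' c P"
     "(\<Union>P\<in>set Ps'. set P) = {1..m}" unfolding path_cover_def by blast
  obtain Ps where Ps: "length Ps \<le> T" "\<forall>Q\<in>set Ps. mono_path n chi c Q" "S \<subseteq> (\<Union>Q\<in>set Ps. set Q)"
    using cov by blast
  define Ps2 where "Ps2 = map (map h) Ps' @ Ps"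
  have mono2: "\<forall>Q\<in>set Ps2. mono_path n chi c Q"
  proof
    fix Q assume "Q \<in> set Ps2"
    then consider "Q \<in> set Ps" | P where "P \<in> set Ps'" "Q = map h P" unfolding Ps2_def by auto
    then show "mono_path n chi c Q"
    proof cases
      case 1 then show ?thesis using Ps by blast
    next
      case 2
      have mp: "mono_path m chi' c P" using 2 Ps' by blast
      hence P: "P \<noteq> []" "distinct P" "set P \<subseteq> {1..m}" "successively (\<lambda>a b. chi' {a,b} = c) P"
        unfolding mono_path_iff by auto
      have inj: "inj_on h (set P)" using inj_on_subset[OF bij_betw_imp_inj_on[OF h] P(3)] .
      have "h ` set P \<subseteq> R" using image_mono[OF P(3), of h] bij_betw_imp_surj_on[OF h] by simp
      hence "set (map h P) \<subseteq> {1..n}" unfolding R_def by auto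
      moreover have "distinct (map h P)" using P(2) inj by (simp add: distinct_map)
      moreover have "successively (\<lambda>a b. chi {a,b} = c) (map h P)"
        using P(4) unfolding successively_map chi'_def by simp
      ultimately show ?thesis unfolding 2 mono_path_iff using P(1) by simp
    qed
  qed
  have un: "(\<Union>Q\<in>set Ps2. set Q) = {1..n}"
  proof -
    have "(\<Union>Q\<in>set (map (map h) Ps'). set Q) = h ` (\<Union>P\<in>set Ps'. set P)" by auto
    also have "\<dots> = R" using Ps'(3) bij_betw_imp_surj_on[OF h] by simp
    finally have a: "(\<Union>Q\<in>set (map (map h) Ps'). set Q) = R" .
    have b: "(\<Union>Q\<in>set Ps. set Q) \<subseteq> {1..n}" using Ps(2) by (simp add: mono_path_iff UN_subset_iff)
    have "(\<Union>Q\<in>set Ps2. set Q) = R \<union> (\<Union>Q\<in>set Ps. set Q)" unfolding Ps2_def using a by simp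
    then show ?thesis using b Ps(3) S(1) unfolding R_def by auto
  qed
  have "path_cover n chi c (length Ps2)" unfolding path_cover_def using mono2 un by blast
  hence "f_col n chi \<le> length Ps2" by (rule f_col_le_cover)
  also have "length Ps2 \<le> f_col m chi' + T" unfolding Ps2_def using Ps'(1) Ps(1) by simp
  finally have "real (f_col n chi) \<le> real (f_col m chi') + real T" by linarith
  moreover have "real (f_col m chi') \<le> real (f_max m)" using f_col_le_max by simp
  moreover have "real (f_max m) < sqrt (real m) + C1" using h4 m1 by blast
  moreover have "sqrt (real m) = sqrt (real (n - card S))" using m_eq by simp
  ultimately show ?thesis by linarith
qed



lemma partition_RB:
  "finite V \<Longrightarrow> \<exists>R B. distinct (R @ B) \<and> set (R @ B) = V \<and>
     successively (\<lambda>a b. chi {a,b} = True) R \<and> successively (\<lambda>a b. chi {a,b} = False) B"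
proof (induction V rule: finite_induct)
  case empty
  then show ?case by (intro exI[of _ "[]"]) simp
next
  case (insert w V)
  then obtain R B where RB: "distinct (R @ B)" "set (R @ B) = V"
     "successively (\<lambda>a b. chi {a,b} = True) R" "successively (\<lambda>a b. chi {a,b} = False) B" by blast
  have wn: "w \<notin> set R" "w \<notin> set B" using RB(2) insert(2) by auto
  show ?case
  proof (cases "R = [] \<or> chi {w, hd R} = True")
    case True
    then show ?thesis using RB wn
      by (intro exI[of _ "w # R"] exI[of _ B]) (auto simp: successively_Cons)
  next
    case nR: False
    show ?thesis
    proof (cases "B = [] \<or> chi {w, hd B} = False")
      case True
      then show ?thesis using RB wn
        by (intro exI[of _ R] exI[of _ "w # B"]) (auto simp: successively_Cons)
    next
      case False
      then obtain b B0 where B: "B = b # B0" "chi {w, b} = True" by (cases B) auto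
      from nR obtain r R0 where R: "R = r # R0" "chi {w, r} = False" by (cases R) auto
      show ?thesis
      proof (cases "chi {r, b}")
        case True
        have "successively (\<lambda>a b. chi {a,b} = True) (w # b # R)"
          using RB(3) B R True by (simp add: successively_Cons insert_commute)
        moreover have "successively (\<lambda>a b. chi {a,b} = False) B0"
          using RB(4) B by (cases B0) auto
        moreover have "distinct ((w # b # R) @ B0)" "set ((w # b # R) @ B0) = insert w V"
          using RB(1,2) wn B by auto
        ultimately show ?thesis by blast
      next
        case False
        have "successively (\<lambda>a b. chi {a,b} = False) (w # r # B)"
          using RB(4) B R False by (simp add: successively_Cons insert_commute)
        moreover have "successively (\<lambda>a b. chi {a,b} = True) R0"
          using RB(3) R by (cases R0) auto
        moreover have "distinct (R0 @ (w # r # B))" "set (R0 @ (w # r # B)) = insert w V"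
          using RB(1,2) wn R by auto
        ultimately show ?thesis by blast
      qed
    qed
  qed
qed

lemma mono_path_length: "mono_path n chi c Q \<Longrightarrow> length Q \<le> n"
proof -
  assume "mono_path n chi c Q"
  hence "distinct Q" "set Q \<subseteq> {1..n}" unfolding mono_path_iff by auto
  hence "card (set Q) \<le> n" using card_mono[of "{1..n}" "set Q"] by simp
  thus ?thesis using distinct_card[OF \<open>distinct Q\<close>] by simp
qed

lemma longest:
  assumes "n \<ge> 1"
  shows "\<exists>P c. mono_path n chi c P \<and> (\<forall>Q c'. mono_path n chi c' Q \<longrightarrow> length Q \<le> length P)"
proof -
  have "mono_path n chi True [1]" using assms by (simp add: mono_path_def)
  hence "\<exists>x. (\<exists>c. mono_path n chi c x) \<and> (\<forall>y. (\<exists>c. mono_path n chi c y) \<longrightarrow> length y \<le> length x)"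
    by (intro ex_has_greatest_nat[of _ _ _ "Suc n"]) (auto dest: mono_path_length)
  thus ?thesis by blast
qed

lemma longest_half:
  assumes P: "mono_path n chi c P" and max: "\<forall>Q c'. mono_path n chi c' Q \<longrightarrow> length Q \<le> length P"
  shows "n \<le> 2 * length P"
proof -
  obtain R B where RB: "distinct (R @ B)" "set (R @ B) = {1..n}"
     "successively (\<lambda>a b. chi {a,b} = True) R" "successively (\<lambda>a b. chi {a,b} = False) B"
    using partition_RB[of "{1..n}" chi] by auto
  have "length R \<le> length P"
  proof (cases "R = []")
    case False
    hence "mono_path n chi True R" using RB unfolding mono_path_iff by auto
    thus ?thesis using max by blast
  qed simp
  moreover have "length B \<le> length P"
  proof (cases "B = []")
    case False
    hence "mono_path n chi False B" using RB unfolding mono_path_iff by auto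
    thus ?thesis using max by blast
  qed simp
  moreover have "length R + length B = n"
    using distinct_card[OF RB(1)] RB(2) by simp
  ultimately show ?thesis by linarith
qed



locale longp =
  fixes n :: nat and chi :: colouring and c :: bool and P :: "nat list"
  assumes P: "mono_path n chi c P"
    and maxP: "\<And>Q c'. mono_path n chi c' Q \<Longrightarrow> length Q \<le> length P"
begin

lemma dist_ins: "distinct (A @ B) \<Longrightarrow> y \<notin> set (A @ B) \<Longrightarrow> distinct (A @ y # B)"
  by auto
lemma dist_ins2: "distinct (A @ M @ C) \<Longrightarrow> y \<notin> set (A @ M @ C) \<Longrightarrow> distinct (A @ y # rev M @ C)"
  by auto
lemma set_ins2: "set (A @ y # rev M @ C) = insert y (set (A @ M @ C))"
  by auto

abbreviation "SC \<equiv> successively (\<lambda>a b. chi {a,b} = c)"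

lemma Pprops: "P \<noteq> []" "distinct P" "set P \<subseteq> {1..n}" "SC P"
  using P unfolding mono_path_iff by auto

lemma no_longer:
  assumes "Q \<noteq> []" "distinct Q" "set Q \<subseteq> {1..n}" "SC Q" "length Q > length P"
  shows False
proof -
  have "mono_path n chi c Q" using assms unfolding mono_path_iff by auto
  thus False using maxP assms(5) by fastforce
qed

lemma SC_take: "SC (take k P)" and SC_drop: "SC (drop k P)"
  using Pprops(4) append_take_drop_id[of k P] successively_append_iff[of _ "take k P" "drop k P"]
  by metis+

context
  fixes y assumes y: "y \<in> {1..n}" "y \<notin> set P"
begin

lemma posa_last: "chi {P ! (length P - 1), y} \<noteq> c"
proof
  assume a: "chi {P ! (length P - 1), y} = c"
  have "SC (P @ [y])" using Pprops a by (simp add: successively_append_iff last_conv_nth)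
  thus False using no_longer[of "P @ [y]"] Pprops y by auto
qed

lemma posa_succ:
  assumes i: "Suc i < length P" "chi {P ! i, y} = c"
  shows "chi {P ! Suc i, y} \<noteq> c"
proof
  assume a: "chi {P ! Suc i, y} = c"
  let ?Q = "take (Suc i) P @ y # drop (Suc i) P"
  have l: "last (take (Suc i) P) = P ! i" using i by (subst last_conv_nth) (auto simp: min_def)
  have h: "hd (drop (Suc i) P) = P ! Suc i" using i by (simp add: hd_drop_conv_nth)
  have "SC ?Q" using SC_take[of "Suc i"] SC_drop[of "Suc i"] i a l h
    by (simp add: successively_append_iff successively_Cons insert_commute)
  moreover have "distinct ?Q"
    using Pprops(2) y(2) dist_ins[of "take (Suc i) P" "drop (Suc i) P" y] by simp
  moreover have "set ?Q \<subseteq> {1..n}" using Pprops(3) y(1) set_take_subset set_drop_subset by fastforce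
  moreover have "length ?Q > length P" using i by simp
  ultimately show False using no_longer[of ?Q] by blast
qed

lemma posa_cross:
  assumes ij: "i < j" "Suc j < length P" "chi {P ! i, y} = c" "chi {P ! j, y} = c"
  shows "chi {P ! Suc i, P ! Suc j} \<noteq> c"
proof
  assume a: "chi {P ! Suc i, P ! Suc j} = c"
  define A where "A = take (Suc i) P"
  define M where "M = take (j - i) (drop (Suc i) P)"
  define C where "C = drop (Suc j) P"
  have PAMC: "P = A @ M @ C"
  proof -
    have "drop (Suc i) P = M @ drop (j - i) (drop (Suc i) P)" unfolding M_def by (rule append_take_drop_id[symmetric])
    moreover have "drop (j - i) (drop (Suc i) P) = C" unfolding C_def using ij by simp
    ultimately have "drop (Suc i) P = M @ C" by metis
    thus ?thesis unfolding A_def using append_take_drop_id[of "Suc i" P] by simp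
  qed
  have SCs: "SC A" "SC M" "SC C" using Pprops(4) PAMC successively_append_iff[of _ A "M @ C"]
      successively_append_iff[of _ M C] by auto
  have lenM: "length M = j - i" unfolding M_def using ij by simp
  have lA: "last A = P ! i" unfolding A_def using ij by (subst last_conv_nth) (auto simp: min_def)
  have hM: "hd M = P ! Suc i" unfolding M_def using ij by (simp add: hd_conv_nth)
  have lM: "last M = P ! j" unfolding M_def using ij by (subst last_conv_nth) (auto simp: min_def)
  have hC: "hd C = P ! Suc j" unfolding C_def using ij by (simp add: hd_drop_conv_nth)
  have Mne: "M \<noteq> []" "C \<noteq> []" using lenM ij unfolding C_def by auto
  let ?Q = "A @ y # rev M @ C"
  have "SC (rev M)" by (subst succ_rev_sym) (rule SCs(2))
  have e1: "chi {y, P ! j} = c" using ij(4) by (simp add: insert_commute)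
  have s1: "SC (rev M @ C)" unfolding successively_append_iff
    using \<open>SC (rev M)\<close> SCs(3) Mne a hM hC by (simp add: last_rev)
  have s2: "SC (y # rev M @ C)" unfolding successively_Cons
    using s1 Mne e1 lM by (simp add: hd_rev)
  have "SC ?Q" unfolding successively_append_iff[of _ A]
    using SCs(1) s2 lA ij(3) by simp
  moreover have "distinct ?Q" using Pprops(2) y(2) PAMC dist_ins2[of A M C y] by simp
  moreover have "set ?Q \<subseteq> {1..n}" using Pprops(3) y(1) PAMC set_ins2[of A y M C] by simp
  moreover have "length ?Q > length P" using PAMC by (simp add: arg_cong[OF PAMC, of length])
  ultimately show False using no_longer[of ?Q] by blast
qed

end
end



lemma sqrt_diff_ge:
  fixes N t :: real
  assumes "0 \<le> t" "t \<le> N" "0 < N"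
  shows "t / (2 * sqrt N) \<le> sqrt N - sqrt (N - t)"
proof -
  define a where "a = sqrt N"
  define b where "b = sqrt (N - t)"
  have a0: "a > 0" using assms unfolding a_def by simp
  have b0: "b \<ge> 0" using assms unfolding b_def by simp
  have ab: "b \<le> a" unfolding a_def b_def using assms by simp
  have "a * a = N" "b * b = N - t" unfolding a_def b_def using assms by simp_all
  hence t: "t = (a - b) * (a + b)" by (simp add: algebra_simps)
  have "(a - b) * (a + b) \<le> (a - b) * (2 * a)" using ab b0 by (intro mult_left_mono) auto
  hence "t \<le> (a - b) * (2 * a)" using t by simp
  hence "t / (2 * a) \<le> a - b" using a0 by (simp add: divide_simps mult.commute)
  thus ?thesis unfolding a_def b_def .
qed

lemma succ_allpairs:
  assumes "distinct xs" "\<And>a b. a \<in> set xs \<Longrightarrow> b \<in> set xs \<Longrightarrow> a \<noteq> b \<Longrightarrow> Q a b"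
  shows "successively Q xs"
  unfolding successively_conv_nth
proof (intro allI impI)
  fix i assume i: "Suc i < length xs"
  have "xs ! i \<noteq> xs ! Suc i" using assms(1) i nth_eq_iff_index_eq by fastforce
  thus "Q (xs ! i) (xs ! Suc i)" using assms(2) i by simp
qed

context longp
begin

lemma nbr_bound:
  fixes C1 C2 :: real
  assumes h4: "\<forall>m. 1 \<le> m \<and> m < n \<longrightarrow> real (f_max m) < sqrt (real m) + C1"
    and h5: "real (f_col n chi) > sqrt (real n) + C2"
    and y: "y \<in> {1..n}" "y \<notin> set P" and C12: "C1 \<ge> C2"
  shows "real (card {x \<in> set P. chi {x, y} = c}) \<le> 2 * (C1 - C2 + 1) * sqrt (real n)"
proof (rule ccontr)
  define k where "k = C1 - C2 + 1"
  define L where "L = length P"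
  define I where "I = {i. i < L \<and> chi {P ! i, y} = c}"
  have finI: "finite I" unfolding I_def by simp
  have "{x \<in> set P. chi {x, y} = c} = (\<lambda>i. P ! i) ` I"
    unfolding I_def L_def by (auto simp: in_set_conv_nth)
  moreover have "inj_on (\<lambda>i. P ! i) I"
    unfolding I_def L_def using Pprops(2) by (auto simp: inj_on_def nth_eq_iff_index_eq)
  ultimately have cardI: "card {x \<in> set P. chi {x, y} = c} = card I" by (simp add: card_image)
  define t where "t = card I"
  assume "\<not> real (card {x \<in> set P. chi {x, y} = c}) \<le> 2 * (C1 - C2 + 1) * sqrt (real n)"
  hence tbig: "real t > 2 * k * sqrt (real n)" unfolding t_def k_def cardI by simp
  have n0: "n > 0" using y by auto
  hence "2 * k * sqrt (real n) \<ge> 0 \<or> True" by simp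
  have Lpos: "L > 0" unfolding L_def using Pprops(1) by simp
  have IsucL: "Suc i < length P" if "i \<in> I" for i
  proof -
    have "i < L" "chi {P ! i, y} = c" using that unfolding I_def by auto
    moreover have "i \<noteq> L - 1" using posa_last[OF y] calculation(2) unfolding L_def by auto
    ultimately show ?thesis unfolding L_def by linarith
  qed
  have k1: "k \<ge> 1" unfolding k_def using C12 by simp
  have "2 * k * sqrt (real n) \<ge> 0" using k1 by simp
  hence "real t > 0" using tbig by linarith
  hence "t > 0" by simp
  hence Ine: "I \<noteq> {}" unfolding t_def by auto
  define m where "m = Max I"
  have mI: "m \<in> I" unfolding m_def using finI Ine by simp
  have mmax: "i \<le> m" if "i \<in> I" for i unfolding m_def using finI that by simp
  have Ic: "chi {P ! i, y} = c" "i < L" if "i \<in> I" for i using that unfolding I_def by auto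
  define g where "g = (\<lambda>i. P ! Suc i)"
  define S where "S = insert y (g ` (I - {m}))"
  have gP: "g i \<in> set P" if "i \<in> I" for i unfolding g_def using IsucL[OF that] L_def by simp
  have ginj: "inj_on g (I - {m})"
  proof (rule inj_onI)
    fix i j assume "i \<in> I - {m}" "j \<in> I - {m}" "g i = g j"
    thus "i = j" unfolding g_def using IsucL Pprops(2) L_def by (auto simp: nth_eq_iff_index_eq)
  qed
  have yg: "y \<notin> g ` (I - {m})" using gP y(2) by auto
  have cardS: "card S = t"
  proof -
    have "card S = Suc (card (g ` (I - {m})))" unfolding S_def using yg finI by simp
    also have "\<dots> = Suc (card (I - {m}))" using card_image[OF ginj] by simp
    also have "\<dots> = t" unfolding t_def using mI finI Ine by (simp add: card_Diff_singleton) (metis Suc_pred card_gt_0_iff finI Ine)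
    finally show ?thesis .
  qed
  have Ssub: "S \<subseteq> {1..n}" unfolding S_def using y gP Pprops(3) by auto
  have P0: "P ! 0 \<notin> S"
  proof
    assume "P ! 0 \<in> S"
    moreover have "P ! 0 \<noteq> y" using y(2) Lpos L_def by auto
    ultimately obtain i where "i \<in> I" "P ! 0 = P ! Suc i" unfolding S_def g_def by auto
    thus False using IsucL Pprops(2) L_def Lpos by (auto simp: nth_eq_iff_index_eq)
  qed
  have "P ! 0 \<in> {1..n}" using Pprops(1,3) nth_mem[of 0 P] by (meson length_greater_0_conv subsetD)
  hence "S \<subset> {1..n}" using Ssub P0 by blast
  hence Slt: "card S < n" using psubset_card_mono[of "{1..n}" S] by simp
  have cov: "\<exists>Ps. length Ps \<le> 1 \<and> (\<forall>Q\<in>set Ps. mono_path n chi c0 Q) \<and> S \<subseteq> (\<Union>Q\<in>set Ps. set Q)" for c0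
  proof (cases "c0 = c")
    case True
    let ?Q = "y # rev (take (Suc m) P)"
    have SCt: "SC (rev (take (Suc m) P))" by (subst succ_rev_sym) (rule SC_take)
    have mL: "m < length P" using Ic(2)[OF mI] L_def by simp
    have lt: "length (take (Suc m) P) = Suc m" using mL by simp
    hence "take (Suc m) P \<noteq> []" by auto
    hence "last (take (Suc m) P) = take (Suc m) P ! (length (take (Suc m) P) - 1)" by (rule last_conv_nth)
    hence "last (take (Suc m) P) = take (Suc m) P ! m" using lt by (metis diff_Suc_1)
    hence hd: "hd (rev (take (Suc m) P)) = P ! m" by (simp add: hd_rev)
    have e: "chi {y, P ! m} = c" using Ic(1)[OF mI] by (simp add: insert_commute)
    have "SC ?Q" unfolding successively_Cons using SCt hd e by simp
    moreover have "distinct ?Q" using Pprops(2) y(2) by (auto dest: in_set_takeD)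
    moreover have "set ?Q \<subseteq> {1..n}" using Pprops(3) y(1) by (auto dest: in_set_takeD)
    ultimately have mp: "mono_path n chi c0 ?Q" unfolding mono_path_iff True by simp
    have "S \<subseteq> set ?Q"
    proof
      fix x assume "x \<in> S"
      then consider "x = y" | i where "i \<in> I - {m}" "x = P ! Suc i" unfolding S_def g_def by auto
      then show "x \<in> set ?Q"
      proof cases
        case 2
        have "i \<in> I" "i \<noteq> m" using 2 by auto
        hence "i < m" using mmax[of i] by linarith
        hence eq: "take (Suc m) P ! Suc i = P ! Suc i" by simp
        have "Suc i < length (take (Suc m) P)" using \<open>i < m\<close> mL by simp
        hence "take (Suc m) P ! Suc i \<in> set (take (Suc m) P)" by (rule nth_mem)
        hence "P ! Suc i \<in> set (take (Suc m) P)" unfolding eq .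
        thus ?thesis using 2 by simp
      qed simp
    qed
    then show ?thesis using mp by (intro exI[of _ "[?Q]"]) simp
  next
    case False
    hence c0: "c0 = (\<not> c)" by auto
    let ?Q = "sorted_list_of_set S"
    have finS: "finite S" using Ssub finite_subset by blast
    have pair: "chi {a, b} \<noteq> c" if ab: "a \<in> S" "b \<in> S" "a \<noteq> b" for a b
    proof -
      have ys: "chi {g i, y} \<noteq> c" if "i \<in> I" for i
        unfolding g_def using posa_succ[OF y IsucL[OF that] Ic(1)[OF that]] by simp
      have gg: "chi {g i, g j} \<noteq> c" if "i \<in> I" "j \<in> I" "i < j" for i j
        unfolding g_def using posa_cross[OF y \<open>i < j\<close> IsucL[OF that(2)] Ic(1)[OF that(1)] Ic(1)[OF that(2)]] by simp
      show ?thesis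
      proof (cases "a = y")
        case True
        then obtain i where "i \<in> I" "b = g i" using ab unfolding S_def by auto
        thus ?thesis using ys True by (metis insert_commute)
      next
        case ay: False
        show ?thesis
        proof (cases "b = y")
          case True
          then obtain i where "i \<in> I" "a = g i" using ab ay unfolding S_def by auto
          thus ?thesis using ys True by metis
        next
          case False
          then obtain i j where ij: "i \<in> I" "j \<in> I" "a = g i" "b = g j"
            using ab ay unfolding S_def by auto
          hence "i \<noteq> j" using ab by auto
          hence "i < j \<or> j < i" by auto
          thus ?thesis using gg ij by (metis insert_commute)
        qed
      qed
    qed
    have "successively (\<lambda>a b. chi {a,b} = c0) ?Q"
      by (rule succ_allpairs) (use pair finS c0 in auto)
    moreover have "?Q \<noteq> []" using finS S_def by simp
    ultimately have mp: "mono_path n chi c0 ?Q" unfolding mono_path_iff using finS Ssub by simp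
    then show ?thesis using finS by (intro exI[of _ "[?Q]"]) simp
  qed
  have "real (f_col n chi) < sqrt (real (n - card S)) + C1 + real (1::nat)"
    by (rule KL[OF h4 Ssub _ Slt cov]) (simp add: S_def)
  hence lt: "sqrt (real n) + C2 < sqrt (real n - real t) + C1 + 1"
    using h5 cardS Slt by (simp add: of_nat_diff)
  have "real t / (2 * sqrt (real n)) \<le> sqrt (real n) - sqrt (real n - real t)"
    by (rule sqrt_diff_ge) (use Slt cardS n0 in auto)
  moreover have "real t / (2 * sqrt (real n)) > k"
    using tbig n0 by (simp add: divide_simps mult.commute mult.left_commute)
  ultimately show False using lt unfolding k_def by linarith
qed

end


fun zig :: "nat list \<Rightarrow> nat list \<Rightarrow> nat list" where
  "zig (x # xs) (y # ys) = x # y # zig xs ys"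
| "zig xs [] = xs"
| "zig [] ys = ys"

lemma zig_set: "set (zig xs ys) = set xs \<union> set ys"
  by (induction xs ys rule: zig.induct) auto

lemma zig_distinct: "distinct xs \<Longrightarrow> distinct ys \<Longrightarrow> set xs \<inter> set ys = {} \<Longrightarrow> distinct (zig xs ys)"
  by (induction xs ys rule: zig.induct) (auto simp: zig_set)

lemma zig_succ:
  "length xs = Suc (length ys) \<Longrightarrow> (\<forall>i<length ys. Q (xs ! i) (ys ! i) \<and> Q (ys ! i) (xs ! Suc i))
   \<Longrightarrow> successively Q (zig xs ys)"
proof (induction ys arbitrary: xs)
  case Nil
  then show ?case by (cases xs) auto
next
  case (Cons y ys)
  then obtain x xs' where xs: "xs = x # xs'" by (cases xs) auto
  have l: "length xs' = Suc (length ys)" using Cons.prems xs by simp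
  then obtain x' xs'' where xs': "xs' = x' # xs''" by (cases xs') auto
  have h1: "Q x y" using Cons.prems(2) xs by (metis length_Cons nth_Cons_0 zero_less_Suc)
  have h2: "Q y x'" using Cons.prems(2) xs xs' by (metis length_Cons nth_Cons_0 nth_Cons_Suc zero_less_Suc)
  have "\<forall>i<length ys. Q (xs' ! i) (ys ! i) \<and> Q (ys ! i) (xs' ! Suc i)"
  proof (intro allI impI)
    fix i assume "i < length ys"
    hence "Suc i < length (y # ys)" by simp
    thus "Q (xs' ! i) (ys ! i) \<and> Q (ys ! i) (xs' ! Suc i)" using Cons.prems(2) xs
      by (metis nth_Cons_Suc)
  qed
  hence IH: "successively Q (zig xs' ys)" using Cons.IH l by blast
  have "hd (zig xs' ys) = x'" using xs' by (cases ys) auto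
  thus ?case using IH h1 h2 xs xs' by (simp add: successively_Cons)
qed

lemma sdr:
  assumes "finite X" "\<forall>q<w. finite (F q) \<and> card (F q) \<le> D" "w + D \<le> card X"
  shows "\<exists>g. inj_on g {..<w} \<and> (\<forall>q<w. g q \<in> X \<and> g q \<notin> F q)"
  using assms(2,3)
proof (induction w)
  case 0
  then show ?case by simp
next
  case (Suc w)
  then obtain g where g: "inj_on g {..<w}" "\<forall>q<w. g q \<in> X \<and> g q \<notin> F q" by fastforce
  define Av where "Av = X - F w - g ` {..<w}"
  have "card (X - F w) \<ge> card X - card (F w)" by (rule diff_card_le_card_Diff) (use Suc.prems in auto)
  moreover have "card (X - F w - g ` {..<w}) \<ge> card (X - F w) - card (g ` {..<w})"
    by (rule diff_card_le_card_Diff) simp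
  moreover have "card (g ` {..<w}) \<le> w" using card_image_le[of "{..<w}" g] by simp
  moreover have "card (F w) \<le> D" using Suc.prems by simp
  ultimately have "card Av \<ge> 1" unfolding Av_def using Suc.prems(2) by linarith
  then obtain x where x: "x \<in> Av" by (metis One_nat_def card.empty ex_in_conv not_less_eq_eq zero_le)
  have "inj_on (g(w := x)) {..<Suc w}"
    using g(1) x unfolding Av_def inj_on_def by (auto simp: less_Suc_eq)
  moreover have "\<forall>q<Suc w. (g(w := x)) q \<in> X \<and> (g(w := x)) q \<notin> F q"
    using g(2) x unfolding Av_def by (auto simp: less_Suc_eq)
  ultimately show ?case by blast
qed



lemma mod_helper: "i < Suc a \<Longrightarrow> (p * Suc a + i) mod Suc a = i"
  by (metis mod_less mod_mult_self3)

context longp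
begin

lemma zigcover:
  assumes ys: "distinct ys" "set ys \<subseteq> {1..n} - set P"
    and N: "\<forall>y\<in>set ys. card {x\<in>set P. chi {x,y} = c} \<le> D2"
    and len: "j * Suc (length ys) + 2 * D2 \<le> length P"
  shows "\<exists>Ps W. length Ps = j \<and> (\<forall>Q\<in>set Ps. mono_path n chi (\<not> c) Q) \<and> W \<subseteq> set P \<and>
           card W = j * Suc (length ys) \<and> W \<subseteq> (\<Union>Q\<in>set Ps. set Q)"
proof -
  define a where "a = length ys"
  define w where "w = j * Suc a"
  define Nb where "Nb = (\<lambda>y. {x\<in>set P. chi {x,y} = c})"
  define F where "F = (\<lambda>q. (if 1 \<le> q mod Suc a then Nb (ys ! (q mod Suc a - 1)) else {}) \<union>
                          (if q mod Suc a < a then Nb (ys ! (q mod Suc a)) else {}))"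
  have Fb: "\<forall>q<w. finite (F q) \<and> card (F q) \<le> 2 * D2"
  proof (intro allI impI conjI)
    fix q
    show "finite (F q)" unfolding F_def Nb_def by simp
    have c1: "card (if 1 \<le> q mod Suc a then Nb (ys ! (q mod Suc a - 1)) else {}) \<le> D2"
    proof (cases "1 \<le> q mod Suc a")
      case True
      have "q mod Suc a < Suc a" by simp
      hence "q mod Suc a - 1 < length ys" using True unfolding a_def by arith
      hence "ys ! (q mod Suc a - 1) \<in> set ys" by simp
      thus ?thesis using N True unfolding Nb_def by simp
    qed simp
    have c2: "card (if q mod Suc a < a then Nb (ys ! (q mod Suc a)) else {}) \<le> D2"
    proof (cases "q mod Suc a < a")
      case True
      hence "ys ! (q mod Suc a) \<in> set ys" unfolding a_def by simp
      thus ?thesis using N True unfolding Nb_def by simp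
    qed simp
    show "card (F q) \<le> 2 * D2" unfolding F_def
      using card_Un_le[of "if 1 \<le> q mod Suc a then Nb (ys ! (q mod Suc a - 1)) else {}"
                        "if q mod Suc a < a then Nb (ys ! (q mod Suc a)) else {}"] c1 c2 by linarith
  qed
  have cardP: "card (set P) = length P" using Pprops(2) by (simp add: distinct_card)
  obtain g where g: "inj_on g {..<w}" "\<forall>q<w. g q \<in> set P \<and> g q \<notin> F q"
    using sdr[of "set P" w F "2 * D2"] Fb len cardP unfolding w_def a_def by auto
  define xs where "xs = (\<lambda>p. map (\<lambda>i. g (p * Suc a + i)) [0..<Suc a])"
  define Ps where "Ps = map (\<lambda>p. zig (xs p) ys) [0..<j]"
  define W where "W = g ` {..<w}"
  have idx: "p * Suc a + i < w" if "p < j" "i < Suc a" for p i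
  proof -
    have "p * Suc a + i < p * Suc a + Suc a" using that by simp
    also have "\<dots> = Suc p * Suc a" by simp
    also have "\<dots> \<le> j * Suc a" using that(1) by (intro mult_le_mono1) simp
    finally show ?thesis unfolding w_def .
  qed
  have mono: "mono_path n chi (\<not> c) (zig (xs p) ys)" if p: "p < j" for p
  proof -
    have lx: "length (xs p) = Suc (length ys)" unfolding xs_def a_def by simp
    have setx: "set (xs p) \<subseteq> set P" unfolding xs_def using g(2) idx[OF p] by auto
    have dx: "distinct (xs p)" unfolding xs_def distinct_map
    proof
      show "inj_on (\<lambda>i. g (p * Suc a + i)) (set [0..<Suc a])"
      proof (rule inj_onI)
        fix i i' assume "i \<in> set [0..<Suc a]" "i' \<in> set [0..<Suc a]" "g (p * Suc a + i) = g (p * Suc a + i')"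
        thus "i = i'" using g(1) idx[OF p] unfolding inj_on_def by fastforce
      qed
    qed simp
    have disj: "set (xs p) \<inter> set ys = {}" using setx ys(2) by auto
    have sc: "successively (\<lambda>u v. chi {u,v} = (\<not> c)) (zig (xs p) ys)"
    proof (rule zig_succ[OF lx], intro allI impI conjI)
      fix i assume i: "i < length ys"
      have xi: "xs p ! i = g (p * Suc a + i)" unfolding xs_def using i a_def by (simp del: upt_Suc)
      have xi': "xs p ! Suc i = g (p * Suc a + Suc i)" unfolding xs_def using i a_def by (simp del: upt_Suc)
      have q1: "p * Suc a + i < w" "p * Suc a + Suc i < w" using idx[OF p, of i] idx[OF p, of "Suc i"] i a_def by auto
      have m1: "(p * Suc a + i) mod Suc a = i" using i a_def by (intro mod_helper) simp
      have m2: "(p * Suc a + Suc i) mod Suc a = Suc i" using i a_def by (intro mod_helper) simp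
      have "g (p * Suc a + i) \<notin> Nb (ys ! i)" using g(2) q1(1) m1 i a_def unfolding F_def by auto
      moreover have "g (p * Suc a + i) \<in> set P" using g(2) q1(1) by auto
      ultimately show "chi {xs p ! i, ys ! i} = (\<not> c)" unfolding xi Nb_def by auto
      have "g (p * Suc a + Suc i) \<notin> Nb (ys ! i)" using g(2) q1(2) m2 unfolding F_def by auto
      moreover have "g (p * Suc a + Suc i) \<in> set P" using g(2) q1(2) by auto
      ultimately show "chi {ys ! i, xs p ! Suc i} = (\<not> c)" unfolding xi' Nb_def by (auto simp: insert_commute)
    qed
    have "zig (xs p) ys \<noteq> []" using lx by (cases "xs p"; cases ys) auto
    moreover have "set (zig (xs p) ys) \<subseteq> {1..n}" using setx ys(2) Pprops(3) by (auto simp: zig_set)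
    ultimately show ?thesis unfolding mono_path_iff using zig_distinct[OF dx ys(1) disj] sc by simp
  qed
  have cov: "W \<subseteq> (\<Union>Q\<in>set Ps. set Q)"
  proof
    fix x assume "x \<in> W"
    then obtain q where q: "q < w" "x = g q" unfolding W_def by auto
    define p where "p = q div Suc a"
    define i where "i = q mod Suc a"
    have qe: "q = p * Suc a + i" unfolding p_def i_def by (metis div_mult_mod_eq)
    have pj: "p < j" unfolding p_def using q(1) unfolding w_def by (simp add: less_mult_imp_div_less)
    have i: "i < Suc a" unfolding i_def by simp
    have "xs p ! i = x" unfolding xs_def using i q(2) qe by (simp del: upt_Suc)
    moreover have "i < length (xs p)" unfolding xs_def using i by simp
    ultimately have "x \<in> set (xs p)" using nth_mem by metis
    hence "x \<in> set (zig (xs p) ys)" by (simp add: zig_set)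
    moreover have "zig (xs p) ys \<in> set Ps" unfolding Ps_def using pj by simp
    ultimately show "x \<in> (\<Union>Q\<in>set Ps. set Q)" by blast
  qed
  have "length Ps = j" unfolding Ps_def by simp
  moreover have "\<forall>Q\<in>set Ps. mono_path n chi (\<not> c) Q" unfolding Ps_def using mono by auto
  moreover have "W \<subseteq> set P" unfolding W_def using g(2) by auto
  moreover have "card W = w" unfolding W_def using card_image[OF g(1)] by simp
  hence "card W = j * Suc (length ys)" unfolding w_def a_def .
  ultimately show ?thesis using cov by blast
qed

end


lemma R1:
  fixes u k :: real assumes "u > 8 * k" "k \<ge> 1"
  shows "12 * k * u^2 + 4 \<le> u^4"
proof -
  have u8: "u \<ge> 8" using assms by linarith
  have "12 * k * u^2 \<le> 12 * (u/8) * u^2" using assms by (intro mult_right_mono) auto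
  also have "\<dots> = (3/2) * u^3" by (simp add: power2_eq_square power3_eq_cube)
  finally have a: "12 * k * u^2 \<le> (3/2) * u^3" .
  have "u^4 = u * u^3" by (simp add: power_numeral_reduce)
  also have "\<dots> \<ge> 8 * u^3" using u8 by (intro mult_right_mono) auto
  finally have b: "u^4 \<ge> 8 * u^3" .
  have "u^3 \<ge> 8^3" using u8 by (intro power_mono) auto
  hence "u^3 \<ge> 1" by simp
  thus ?thesis using a b by linarith
qed

lemma R2:
  fixes u k :: real assumes "u > 8 * k" "k \<ge> 1"
  shows "8 * k * u^2 + 1 \<le> u^4"
proof -
  have "k * u^2 \<ge> 0" using assms by simp
  thus ?thesis using R1[OF assms] by linarith
qed

lemma R3:
  fixes u k s jr z :: real
  assumes u: "u > 8 * k" "k \<ge> 1" and s: "s + 1 > u^2 + 8 * k * u"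
    and j: "jr \<le> u^4 / (s + 1)" and z: "0 \<le> z" "z \<le> 8 * k * u^2"
  shows "sqrt z + jr \<le> u^2 - k * u"
proof -
  have u0: "u > 0" using u by linarith
  have "sqrt z \<le> sqrt (8 * k * u^2)" using z by simp
  also have "\<dots> = sqrt (8 * k) * u" using u0 u by (simp add: real_sqrt_mult)
  also have "\<dots> \<le> 3 * k * u"
  proof -
    have "k * 1 \<le> k * k" using u(2) by (intro mult_left_mono) auto
    hence "8 * k \<le> (3 * k)^2" using u(2) by (simp add: power2_eq_square)
    hence "sqrt (8 * k) \<le> 3 * k" using u(2) by (simp add: real_sqrt_le_iff real_le_lsqrt) 
    thus ?thesis using u0 by (intro mult_right_mono) auto
  qed
  finally have a: "sqrt z \<le> 3 * k * u" .
  have pos: "u^2 + 8 * k * u > 0" using u0 u by (simp add: add_pos_pos)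
  have "u^4 / (s + 1) \<le> u^4 / (u^2 + 8 * k * u)"
    using s pos by (intro divide_left_mono) auto
  also have "\<dots> \<le> u^2 - 4 * k * u"
  proof -
    have "u^4 \<le> (u^2 - 4 * k * u) * (u^2 + 8 * k * u)"
    proof -
      have "(u^2 - 4 * k * u) * (u^2 + 8 * k * u) = u^4 + 4 * k * u^2 * (u - 8 * k)"
        by (simp add: algebra_simps power2_eq_square power4_eq_xxxx)
      moreover have "4 * k * u^2 * (u - 8 * k) \<ge> 0" using u u0 by simp
      ultimately show ?thesis by linarith
    qed
    thus ?thesis using pos by (simp add: divide_le_eq)
  qed
  finally have b: "jr \<le> u^2 - 4 * k * u" using j by linarith
  show ?thesis using a b by linarith
qed



theorem lemma3p2:
  fixes C1 C2 :: real and n :: nat and chi :: colouring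
  assumes "C1 \<ge> C2" and "C2 \<ge> 0"
    and "real n > 8 ^ 4 * (C1 - C2 + 1) ^ 4"
    and "\<forall>m. 1 \<le> m \<and> m < n \<longrightarrow> real (f_max m) < sqrt (real m) + C1"
    and "real (f_col n chi) > sqrt (real n) + C2"
  shows "\<exists>P c. mono_path n chi c P \<and>
           real (card ({1..n} - set P)) \<le> sqrt (real n) + 8 * (C1 - C2 + 1) * root 4 (real n) \<and>
           (\<forall>y \<in> {1..n} - set P.
              real (card {x \<in> set P. chi {x, y} = c}) \<le> 2 * (C1 - C2 + 1) * sqrt (real n))"
proof -
  note h4 = assms(4) and h5 = assms(5)
  define k where "k = C1 - C2 + 1"
  have k1: "k \<ge> 1" unfolding k_def using assms(1) by simp
  define u where "u = root 4 (real n)"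
  have u0: "u \<ge> 0" unfolding u_def by simp
  have u4: "u ^ 4 = real n" unfolding u_def by simp
  have sq: "sqrt (real n) = u^2"
  proof -
    have "real n = (u^2)^2" using u4 by (simp add: power_mult[symmetric])
    hence "sqrt (real n) = sqrt ((u^2)^2)" by simp
    also have "\<dots> = u^2" by (simp only: real_sqrt_abs) simp
    finally show ?thesis .
  qed
  have e84: "(8 * k) ^ 4 = 8 ^ 4 * (C1 - C2 + 1) ^ 4" unfolding k_def by (simp only: power_mult_distrib)
  have "(8 * k) ^ 4 < u ^ 4" using assms(3) u4 e84 by simp
  hence u8k: "u > 8 * k" using u0 by (rule power_less_imp_less_base)
  have n1: "n \<ge> 1"
  proof -
    have "(8 * k)^4 > 0" using k1 by simp
    hence "real n > 0" using assms(3) e84 by linarith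
    thus ?thesis by simp
  qed
  obtain P c where P: "mono_path n chi c P" and maxP0: "\<forall>Q c'. mono_path n chi c' Q \<longrightarrow> length Q \<le> length P"
    using longest[OF n1] by blast
  interpret longp n chi c P using P maxP0 by unfold_locales auto
  have nb: "\<forall>y \<in> {1..n} - set P. real (card {x \<in> set P. chi {x, y} = c}) \<le> 2 * k * sqrt (real n)"
    using nbr_bound[OF h4 h5 _ _ assms(1)] unfolding k_def by blast
  have main: "real (card ({1..n} - set P)) \<le> sqrt (real n) + 8 * k * u"
  proof (rule ccontr)
    define Y where "Y = {1..n} - set P"
    define s where "s = card Y"
    define L where "L = length P"
    assume "\<not> real (card ({1..n} - set P)) \<le> sqrt (real n) + 8 * k * u"
    hence sbig: "real s > u^2 + 8 * k * u" unfolding s_def Y_def sq by simp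
    have kpos: "k > 0" using k1 by simp
    have upos: "u > 0" using u8k k1 by linarith
    have u2pos: "u^2 > 0" using upos by simp
    have cardP: "card (set P) = L" unfolding L_def using Pprops(2) by (simp add: distinct_card)
    have finY: "finite Y" unfolding Y_def by simp
    have sL: "s + L = n"
    proof -
      have "s = card {1..n} - card (set P)" unfolding s_def Y_def
        using Pprops(3) by (simp add: card_Diff_subset)
      moreover have "card (set P) \<le> card {1..n}" using Pprops(3) by (intro card_mono) auto
      ultimately show ?thesis using cardP by simp
    qed
    have L2: "n \<le> 2 * L" unfolding L_def using longest_half[OF P maxP0] .
    have spos: "s > 0"
    proof -
      have "u^2 + 8 * k * u \<ge> 0" using upos kpos by simp
      hence "real s > 0" using sbig by linarith
      thus ?thesis by simp
    qed
    have Ln: "L < n" using sL spos by simp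
    define D2 where "D2 = nat \<lfloor>2 * k * sqrt (real n)\<rfloor>"
    have ND: "\<forall>y\<in>set ys. card {x\<in>set P. chi {x,y} = c} \<le> D2" if "set ys \<subseteq> Y" for ys
      using nb that unfolding D2_def Y_def by (auto intro: le_nat_floor)
    have D2r: "real D2 \<le> 2 * k * u^2" unfolding D2_def sq by (rule of_nat_floor) (use kpos u2pos in simp)
    define yl where "yl = sorted_list_of_set Y"
    have yl: "distinct yl" "set yl = Y" "length yl = s" unfolding yl_def s_def using finY by auto
    have YP: "Y \<subseteq> {1..n} - set P" unfolding Y_def by simp
    have finish: "real (f_col n chi) < sqrt (real n - real (card W)) + C1 + real j"
      if Ps: "length Ps = j" "1 \<le> j" "\<forall>Q\<in>set Ps. mono_path n chi (\<not> c) Q"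
        and W: "W \<subseteq> set P" "W \<noteq> {}" "W \<subseteq> (\<Union>Q\<in>set Ps. set Q)" for W Ps j
    proof -
      have cW: "card W \<le> L" using W(1) cardP card_mono by fastforce
      have cov: "\<exists>Ps. length Ps \<le> j \<and> (\<forall>Q\<in>set Ps. mono_path n chi c0 Q) \<and> W \<subseteq> (\<Union>Q\<in>set Ps. set Q)" for c0
      proof (cases "c0 = c")
        case True
        then show ?thesis using P W(1) Ps(2) by (intro exI[of _ "[P]"]) auto
      next
        case False
        hence "c0 = (\<not> c)" by auto
        then show ?thesis using Ps W(3) by (intro exI[of _ Ps]) auto
      qed
      have "real (f_col n chi) < sqrt (real (n - card W)) + C1 + real j"
        by (rule KL[OF h4 _ W(2) _ cov]) (use W(1) Pprops(3) cW Ln in auto)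
      thus ?thesis using cW Ln by (simp add: of_nat_diff)
    qed
    have h5': "real (f_col n chi) > u^2 + C1 - k + 1" using h5 unfolding sq k_def by simp
    show False
    proof (cases "real s \<ge> 2 * k * u^2")
      case True
      define a where "a = nat \<lceil>2 * k * u^2\<rceil>"
      have as: "a \<le> s" unfolding a_def using True by simp
      have ar: "real a \<ge> 2 * k * u^2" unfolding a_def by (rule real_nat_ceiling_ge)
      have ar2: "real a < 2 * k * u^2 + 1"
      proof -
        have "of_int \<lceil>2 * k * u^2\<rceil> - 1 < 2 * k * u^2" using ceiling_correct by blast
        moreover have "\<lceil>2 * k * u^2\<rceil> \<ge> 0" using kpos u2pos mult_pos_pos[OF mult_pos_pos[OF _ kpos] u2pos, of 2] by linarith
        ultimately show ?thesis unfolding a_def by simp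
      qed
      define ys where "ys = take a yl"
      have ys: "distinct ys" "set ys \<subseteq> Y" "length ys = a"
        unfolding ys_def using yl as by (auto dest: in_set_takeD)
      have "real (1 * Suc a + 2 * D2) \<le> real L"
      proof -
        have "12 * k * u^2 + 4 \<le> u^4" by (rule R1[OF u8k k1])
        moreover have "real n \<le> 2 * real L" using L2 by simp
        ultimately show ?thesis using ar2 D2r u4 by simp
      qed
      hence "1 * Suc a + 2 * D2 \<le> L" by (simp only: of_nat_le_iff)
      hence len: "1 * Suc (length ys) + 2 * D2 \<le> length P" using ys(3) unfolding L_def by simp
      obtain Ps W where PW: "length Ps = 1" "\<forall>Q\<in>set Ps. mono_path n chi (\<not> c) Q" "W \<subseteq> set P"
         "card W = 1 * Suc (length ys)" "W \<subseteq> (\<Union>Q\<in>set Ps. set Q)"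
        using zigcover[OF ys(1) _ ND[OF ys(2)] len] ys(2) YP by blast
      have Wne: "W \<noteq> {}" using PW(4) by auto
      have f: "real (f_col n chi) < sqrt (real n - real (Suc a)) + C1 + 1"
        using finish[OF PW(1) _ PW(2) PW(3) Wne PW(5)] PW(4) ys(3) by simp
      have cW: "Suc a \<le> n" using PW(4) ys(3) PW(3) cardP card_mono[of "set P" W] Ln by simp
      have "real (Suc a) / (2 * sqrt (real n)) \<le> sqrt (real n) - sqrt (real n - real (Suc a))"
        by (rule sqrt_diff_ge) (use cW n1 in auto)
      moreover have "real (Suc a) / (2 * sqrt (real n)) > k"
      proof -
        have "real (Suc a) > k * (2 * u^2)" using ar by simp
        thus ?thesis unfolding sq using u2pos by (simp add: field_simps)
      qed
      ultimately show False using f h5' sq by linarith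
    next
      case False
      hence ssmall: "real s < 2 * k * u^2" by simp
      have "real (2 * D2 + Suc s) \<le> real L"
      proof -
        have "8 * k * u^2 + 1 \<le> u^4" by (rule R2[OF u8k k1])
        moreover have "real s + real L = real n" using sL by (metis of_nat_add)
        ultimately show ?thesis using ssmall D2r u4 by simp
      qed
      hence len0: "2 * D2 + Suc s \<le> L" by (simp only: of_nat_le_iff)
      define j where "j = (L - 2 * D2) div Suc s"
      have j1: "1 \<le> j"
      proof -
        have "Suc s div Suc s \<le> (L - 2 * D2) div Suc s" using len0 by (intro div_le_mono) simp
        thus ?thesis unfolding j_def by simp
      qed
      have jle: "j * Suc s \<le> L - 2 * D2" unfolding j_def by (rule div_times_less_eq_dividend)
      have jge: "L - 2 * D2 < j * Suc s + Suc s"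
      proof -
        have "(L - 2 * D2) mod Suc s < Suc s" by simp
        moreover have "j * Suc s + (L - 2 * D2) mod Suc s = L - 2 * D2" unfolding j_def by (rule div_mult_mod_eq)
        ultimately show ?thesis by linarith
      qed
      have len: "j * Suc (length yl) + 2 * D2 \<le> length P" using jle len0 yl(3) unfolding L_def by simp
      obtain Ps W where PW: "length Ps = j" "\<forall>Q\<in>set Ps. mono_path n chi (\<not> c) Q" "W \<subseteq> set P"
         "card W = j * Suc (length yl)" "W \<subseteq> (\<Union>Q\<in>set Ps. set Q)"
        using zigcover[OF yl(1) _ ND len] yl(2) YP by blast
      have Wne: "W \<noteq> {}" using PW(4) j1 by auto
      have f: "real (f_col n chi) < sqrt (real n - real (j * Suc s)) + C1 + real j"
        using finish[OF PW(1) j1 PW(2) PW(3) Wne PW(5)] PW(4) yl(3) by simp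
      have wr1: "real (j * Suc s) \<le> real L" using jle by linarith
      have "L \<le> j * Suc s + s + 2 * D2" using jge len0 by linarith
      hence wr2: "real L - 2 * real D2 \<le> real (j * Suc s) + real s" by linarith
      have Lr: "real L = real n - real s" using sL by (metis add_diff_cancel_left' of_nat_add add.commute)
      have z0: "0 \<le> real n - real (j * Suc s)" using wr1 Ln by simp
      have z1: "real n - real (j * Suc s) \<le> 8 * k * u^2" using wr2 Lr ssmall D2r by simp
      have s1: "real s + 1 > u^2 + 8 * k * u" using sbig by simp
      have jr: "real j \<le> u^4 / (real s + 1)"
      proof -
        have "real L \<le> real n" using Ln by simp
        hence "real j * (real s + 1) \<le> real n" using wr1 by (simp add: algebra_simps)
        thus ?thesis using u4 by (simp add: field_simps)
      qed
      have "sqrt (real n - real (j * Suc s)) + real j \<le> u^2 - k * u"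
        by (rule R3[OF u8k k1 s1 jr z0 z1])
      moreover have "k * u \<ge> k - 1"
      proof -
        have "k * 1 \<le> k * u" using u8k k1 by (intro mult_left_mono) auto
        thus ?thesis by simp
      qed
      ultimately show False using f h5' by linarith
    qed
  qed
  show ?thesis using P nb main unfolding k_def u_def by blast
qed


end
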